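(* For every integer $k\geqslant 1$, there exists a finite word $W$ over a $3$-letter alphabet with $r(W)\geqslant k$.
   Context: A square is a finite non-empty word of the form $XX$; a word is square-free if it has no square factor. A square reduction replaces a word $UXXV$ (with $X$ non-empty) by $UXV$. A reduct of $W$ is any square-free word obtainable from $W$ by a finite sequence of square reductions, and $r(W)$ is the number of distinct reducts of $W$. *)

theory Defs
  imports Main
begin

definition square_free :: "'a list \<Rightarrow> bool" where
  "square_free w \<longleftrightarrow> \<not> (\<exists>u x v. x \<noteq> [] \<and> w = u @ x @ x @ v)"

definition sq_step :: "'a list \<Rightarrow> 'a list \<Rightarrow> bool" where
  "sq_step w w' \<longleftrightarrow> (\<exists>u x v. x \<noteq> [] \<and> w = u @ x @ x @ v \<and> w' = u @ x @ v)"

definition reducts :: "'a list \<Rightarrow> 'a list set" where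
  "reducts w = {w'. sq_step\<^sup>*\<^sup>* w w' \<and> square_free w'}"

definition r :: "'a list \<Rightarrow> nat" where
  "r w = card (reducts w)"

end

theory Submission
  imports Defs
begin

fun tm :: "nat \<Rightarrow> bool" where
  "tm n = (if n = 0 then False else (tm (n div 2) \<noteq> odd n))"

declare tm.simps[simp del]

lemma tm_0[simp]: "tm 0 = False"
  by (simp add: tm.simps)

lemma tm_even[simp]: "tm (2*n) = tm n"
  by (cases "n = 0") (simp_all add: tm.simps[of "2*n"])

lemma tm_odd[simp]: "tm (Suc (2*n)) = (\<not> tm n)"
  by (simp add: tm.simps[of "Suc (2*n)"])

lemma tm_4a: "tm (4*m) = tm m"
  using tm_even[of "2*m"] by (simp add: mult.assoc[symmetric])
lemma tm_4b: "tm (4*m+1) = (\<not> tm m)"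
  using tm_odd[of "2*m"] by (simp add: mult.assoc[symmetric])
lemma tm_4c: "tm (4*m+2) = (\<not> tm m)"
  using tm_even[of "Suc (2*m)"] tm_odd[of m] by (simp add: algebra_simps)
lemma tm_4d: "tm (4*m+3) = tm m"
proof -
  have "4*m+3 = Suc (2*Suc (2*m))" by simp
  then show ?thesis by (simp only: tm_odd) simp
qed
lemma tm_4e: "tm (4*m+4) = tm (Suc m)"
  using tm_4a[of "Suc m"] by (simp add: algebra_simps)

lemma no_overlap: "0 < m \<Longrightarrow> \<exists>j. i \<le> j \<and> j \<le> i + m \<and> tm (j + m) \<noteq> tm j"
proof (induction m arbitrary: i rule: less_induct)
  case (less m)
  show ?case
  proof (cases "odd m")
    case True
    show ?thesis
    proof (rule ccontr)
      assume "\<not> ?thesis"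
      hence H: "\<And>j. i \<le> j \<Longrightarrow> j \<le> i + m \<Longrightarrow> tm (j + m) = tm j" by blast
      have alt: "tm (Suc j) \<noteq> tm j" if "i \<le> j" "j < i + m" for j
      proof (cases "even j")
        case True
        then obtain n where "j = 2*n" by blast
        then show ?thesis by simp
      next
        case False
        with \<open>odd m\<close> have "even (j+m)" by simp
        then obtain q where q: "j + m = 2*q" by blast
        have "tm (Suc (j+m)) \<noteq> tm (j+m)" using q by simp
        moreover have "tm (j+m) = tm j" using H that by simp
        moreover have "tm (Suc j + m) = tm (Suc j)" using H[of "Suc j"] that by simp
        ultimately show ?thesis by simp
      qed
      have "k \<le> m \<Longrightarrow> tm (i + k) = (tm i \<noteq> odd k)" for k
      proof (induction k)
        case 0 then show ?case by simp
      next
        case (Suc k)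
        then have "tm (Suc (i+k)) \<noteq> tm (i+k)" using alt[of "i+k"] by simp
        with Suc show ?case by auto
      qed
      from this[of m] \<open>odd m\<close> have "tm (i+m) = (\<not> tm i)" by simp
      moreover have "tm (i+m) = tm i" using H[of i] by (simp add: add.commute)
      ultimately show False by simp
    qed
  next
    case False
    define m' where "m' = m div 2"
    have m': "m = 2*m'" using False m'_def by simp
    with less.prems have "0 < m'" "m' < m" by auto
    show ?thesis
    proof (cases "even i")
      case True
      define i' where "i' = i div 2"
      have i': "i = 2*i'" using True i'_def by simp
      obtain j' where j': "i' \<le> j'" "j' \<le> i' + m'" "tm (j' + m') \<noteq> tm j'"
        using less.IH[OF \<open>m' < m\<close> \<open>0 < m'\<close>, of i'] by blast
      have e: "2*j' + m = 2*(j' + m')" using m' by simp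
      have "tm (2*j' + m) = tm (j' + m')" unfolding e by (rule tm_even)
      hence "tm (2*j' + m) \<noteq> tm (2*j')" using j'(3) by simp
      moreover have "i \<le> 2*j'" using j'(1) i' by simp
      moreover have "2*j' \<le> i + m" using j'(2) i' m' by simp
      ultimately show ?thesis by blast
    next
      case False
      define i' where "i' = i div 2"
      have i': "i = Suc (2*i')" using False i'_def by simp
      obtain j' where j': "i' \<le> j'" "j' \<le> i' + m'" "tm (j' + m') \<noteq> tm j'"
        using less.IH[OF \<open>m' < m\<close> \<open>0 < m'\<close>, of i'] by blast
      have e: "Suc (2*j') + m = Suc (2*(j' + m'))" using m' by simp
      have "tm (Suc (2*j') + m) = (\<not> tm (j' + m'))" unfolding e by (rule tm_odd)
      hence "tm (Suc (2*j') + m) \<noteq> tm (Suc (2*j'))" using j'(3) by simp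
      moreover have "i \<le> Suc (2*j')" using j'(1) i' by simp
      moreover have "Suc (2*j') \<le> i + m" using j'(2) i' m' by simp
      ultimately show ?thesis by blast
    qed
  qed
qed

definition T :: "nat \<Rightarrow> int" where "T k = (if tm k then 1 else 0)"

definition d :: "nat \<Rightarrow> nat" where "d k = nat (T (Suc k) - T k + 1)"

definition dw :: "nat \<Rightarrow> nat \<Rightarrow> nat list" where "dw i n = map d [i..<i+n]"

lemma d_le: "d k \<le> 2" by (simp add: d_def T_def)

lemma set_dw: "set (dw i n) \<subseteq> {0,1,2}"
proof
  fix x assume "x \<in> set (dw i n)"
  then obtain k where "x = d k" by (auto simp: dw_def)
  then have "x \<le> 2" using d_le by simp
  then have "x = 0 \<or> x = 1 \<or> x = 2" by presburger
  then show "x \<in> {0,1,2}" by blast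
qed

lemma dw_add: "dw i (a + b) = dw i a @ dw (i + a) b"
  unfolding dw_def using upt_add_eq_append[of i "i+a" b] by (simp add: add.assoc)

lemma dw_nth: "k < n \<Longrightarrow> dw i n ! k = d (i + k)"
  by (simp add: dw_def)

lemma length_dw[simp]: "length (dw i n) = n" by (simp add: dw_def)

lemma d_inj: "d k = d k' \<Longrightarrow> T (Suc k) - T k = T (Suc k') - T k'"
  unfolding d_def T_def by (auto split: if_splits)

lemma sqfree_dw: "square_free (dw i n)"
  unfolding square_free_def
proof (rule notI, elim exE conjE)
  fix u x v assume xne: "x \<noteq> []" and eq: "dw i n = u @ x @ x @ v"
  define p where "p = length u"
  define l where "l = length x"
  define a where "a = i + p"
  have l0: "0 < l" using xne l_def by simp
  have len: "p + 2*l \<le> n" using arg_cong[OF eq, of length] p_def l_def by simp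
  have eqd: "d (a + j) = d (a + l + j)" if "j < l" for j
  proof -
    have "dw i n ! (p + j) = x ! j" using eq p_def that l_def by (simp add: nth_append)
    moreover have "dw i n ! (p + l + j) = x ! j" using eq p_def that l_def
      by (simp add: nth_append)
    moreover have "dw i n ! (p + j) = d (a + j)" using dw_nth[of "p+j" n i] len that a_def by (simp add: add.assoc)
    moreover have "dw i n ! (p + l + j) = d (a + l + j)" using dw_nth[of "p+l+j" n i] len that a_def
      by (simp add: add.assoc)
    ultimately show ?thesis by simp
  qed
  define D where "D j = T (a + l + j) - T (a + j)" for j
  have Dc: "j \<le> l \<Longrightarrow> D j = D 0" for j
  proof (induction j)
    case 0 then show ?case by simp
  next
    case (Suc j)
    then have "d (a + j) = d (a + l + j)" using eqd by simp
    then have "T (Suc (a+j)) - T (a+j) = T (Suc (a+l+j)) - T (a+l+j)" by (rule d_inj)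
    then have "D (Suc j) = D j" unfolding D_def by simp
    with Suc show ?case by simp
  qed
  have "D l + D 0 = T (a + l + l) - T a" unfolding D_def by simp
  moreover have "T (a + l + l) - T a \<le> 1" "T (a + l + l) - T a \<ge> -1" by (simp_all add: T_def)
  ultimately have "D 0 = 0" using Dc[of l] by simp
  have tmeq: "tm (j + l) = tm j" if "a \<le> j" "j \<le> a + l" for j
  proof -
    define j' where "j' = j - a"
    have j'l: "j' \<le> l" and jj: "j = a + j'" using that j'_def by auto
    have "D j' = 0" using Dc[OF j'l] \<open>D 0 = 0\<close> by simp
    hence "T (a + l + j') = T (a + j')" unfolding D_def by simp
    moreover have "a + l + j' = j + l" using jj by simp
    ultimately have "T (j + l) = T j" using jj by simp
    thus ?thesis unfolding T_def by (simp split: if_splits)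
  qed
  obtain j where j1: "a \<le> j" and j2: "j \<le> a + l" and j3: "tm (j + l) \<noteq> tm j"
    using no_overlap[OF l0, of a] by blast
  show False using tmeq[OF j1 j2] j3 by simp
qed

lemma sq_stepI: "x \<noteq> [] \<Longrightarrow> sq_step (u @ x @ x @ v) (u @ x @ v)"
  unfolding sq_step_def by blast

lemma sq_step_ctx: "sq_step w w' \<Longrightarrow> sq_step (p @ w @ q) (p @ w' @ q)"
  unfolding sq_step_def
  by (elim exE conjE) (rule exI[of _ "p @ _"], rule exI, rule exI[of _ "_ @ q"], simp)

lemma rt_ctx: "sq_step\<^sup>*\<^sup>* w w' \<Longrightarrow> sq_step\<^sup>*\<^sup>* (p @ w @ q) (p @ w' @ q)"
proof (induction rule: rtranclp_induct)
  case base then show ?case by simp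
next
  case (step y z)
  then show ?case using sq_step_ctx[of y z p q] by (meson rtranclp.rtrancl_into_rtrancl)
qed

lemma rt_ctx_r: "sq_step\<^sup>*\<^sup>* w w' \<Longrightarrow> sq_step\<^sup>*\<^sup>* (w @ q) (w' @ q)"
  using rt_ctx[of w w' "[]" q] by simp

lemma rt_ctx_l: "sq_step\<^sup>*\<^sup>* w w' \<Longrightarrow> sq_step\<^sup>*\<^sup>* (p @ w) (p @ w')"
  using rt_ctx[of w w' p "[]"] by simp

definition valid :: "nat list \<Rightarrow> nat \<Rightarrow> nat \<Rightarrow> bool" where
  "valid w i l \<longleftrightarrow> 0 < l \<and> i + 2*l \<le> length w \<and> take l (drop i w) = take l (drop (i+l) w)"

lemma valid_step:
  assumes "valid w i l"
  shows "sq_step w (take (i+l) w @ drop (i+2*l) w)"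
proof -
  define u where "u = take i w"
  define x where "x = take l (drop i w)"
  define v where "v = drop (i+2*l) w"
  from assms have l0: "0 < l" and len: "i + 2*l \<le> length w"
    and eqx: "take l (drop i w) = take l (drop (i+l) w)" by (auto simp: valid_def)
  have "x \<noteq> []" using l0 len x_def by simp
  have d1: "drop i w = x @ drop (i+l) w" unfolding x_def
    by (metis append_take_drop_id drop_drop add.commute)
  have d2: "drop (i+l) w = x @ v" unfolding x_def v_def eqx
    by (metis append_take_drop_id drop_drop add.commute mult_2 add.assoc)
  have w: "w = u @ x @ x @ v" using d1 d2 u_def by (metis append_take_drop_id)
  have "take (i+l) w = u @ x" by (simp add: take_add u_def x_def)
  moreover have "drop (i+2*l) w = v" by (simp add: v_def)
  ultimately show ?thesis using w sq_stepI[OF \<open>x \<noteq> []\<close>, of u v] by simp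
qed

fun runs :: "nat list \<Rightarrow> (nat \<times> nat) list \<Rightarrow> nat list option" where
  "runs w [] = Some w"
| "runs w ((i,l) # ss) = (if valid w i l then runs (take (i+l) w @ drop (i+2*l) w) ss else None)"

lemma runs_ok: "runs w ss = Some w' \<Longrightarrow> sq_step\<^sup>*\<^sup>* w w'"
proof (induction w ss rule: runs.induct)
  case (1 w) then show ?case by simp
next
  case (2 w i l ss)
  then have v: "valid w i l" by (simp split: if_splits)
  with 2 have "sq_step\<^sup>*\<^sup>* (take (i+l) w @ drop (i+2*l) w) w'" by simp
  with valid_step[OF v] show ?case by (meson converse_rtranclp_into_rtranclp)
qed

definition G1 :: "nat list" where "G1 = [1,2,1,0,1,0]"

lemma G1_A: "sq_step\<^sup>*\<^sup>* ([2,1,0] @ G1) [2,1,0,1,2,1,0]"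
  by (rule runs_ok[of _ "[(5, 2)]"]) (simp add: G1_def valid_def)

lemma G1_Q: "sq_step\<^sup>*\<^sup>* ([2,1,0] @ G1) [2,1,0]"
  by (rule runs_ok[of _ "[(0, 4), (1, 2)]"]) (simp add: G1_def valid_def)

lemma G1_set: "set G1 \<subseteq> {0,1,2}" by (simp add: G1_def)

definition G2 :: "nat list" where "G2 = [2,0,1,2,0,2,1,0,2,0,1,2,0,1,0,2,0,2,1,0]"

lemma G2_A: "sq_step\<^sup>*\<^sup>* ([2,1,0] @ G2) [2,1,0,2,0,1,2,0,2,1,0]"
  by (rule runs_ok[of _ "[(11, 3),(9, 4),(10, 2),(7, 3)]"]) (simp add: G2_def valid_def)

lemma G2_Q: "sq_step\<^sup>*\<^sup>* ([2,1,0] @ G2) [2,1,0]"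
  by (rule runs_ok[of _ "[(0, 8), (3, 3), (1, 4), (2, 2), (0, 3)]"]) (simp add: G2_def valid_def)

lemma G2_set: "set G2 \<subseteq> {0,1,2}" by (simp add: G2_def)

definition G3 :: "nat list" where "G3 = [2,0,1,2,1,0,2,0,1,0,2,0,2,1,0,1,2,0,2,1,1,2,0,2,1,0,1,0]"

lemma G3_A: "sq_step\<^sup>*\<^sup>* ([2,1,0] @ G3) [2,1,0,2,0,1,2,1,0,1,2,0,2,1,0]"
  by (rule runs_ok[of _ "[(22, 1),(26, 2),(7, 4),(8, 2),(6, 3),(9, 4)]"]) (simp add: G3_def valid_def)

lemma G3_Q: "sq_step\<^sup>*\<^sup>* ([2,1,0] @ G3) [2,1,0]"
  by (rule runs_ok[of _ "[(22, 1), (18, 4), (0, 6), (1, 4), (3, 6), (2, 2), (4, 2), (0, 3)]"]) (simp add: G3_def valid_def)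

lemma G3_set: "set G3 \<subseteq> {0,1,2}" by (simp add: G3_def)

lemma tm_s1: "tm (Suc (4*m)) = (\<not> tm m)" using tm_4b[of m] by simp
lemma tm_s2: "tm (Suc (Suc (4*m))) = (\<not> tm m)"
proof -
  have "Suc (Suc (4*m)) = 4*m+2" by simp
  then show ?thesis using tm_4c[of m] by (simp only:)
qed
lemma tm_s3: "tm (Suc (Suc (Suc (4*m)))) = tm m"
proof -
  have "Suc (Suc (Suc (4*m))) = 4*m+3" by simp
  then show ?thesis using tm_4d[of m] by (simp only:)
qed
lemma tm_s4: "tm (Suc (Suc (Suc (Suc (4*m))))) = tm (Suc m)"
proof -
  have "Suc (Suc (Suc (Suc (4*m)))) = 4*m+4" by simp
  then show ?thesis using tm_4e[of m] by (simp only:)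
qed

lemma dw_Suc: "dw i (Suc n) = d i # dw (Suc i) n"
proof -
  have "[i..<i + Suc n] = i # [Suc i..<Suc i + n]" by (simp add: upt_conv_Cons del: upt_Suc)
  then show ?thesis by (simp add: dw_def)
qed

lemma dw_0: "dw i 0 = []" by (simp add: dw_def)

lemma dw3: "dw i 3 = [d i, d (Suc i), d (Suc (Suc i))]"
  by (simp add: eval_nat_numeral dw_Suc dw_0)
lemma dw4: "dw i 4 = [d i, d (Suc i), d (Suc (Suc i)), d (Suc (Suc (Suc i)))]"
  by (simp add: eval_nat_numeral dw_Suc dw_0)

lemma d_val: "d k = (if tm (Suc k) = tm k then 1 else if tm (Suc k) then 2 else 0)"
  by (simp add: d_def T_def)

lemma blk3: "\<not> tm m \<Longrightarrow> dw (4*m) 3 = [2,1,0]"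
  unfolding dw3 d_val by (simp add: tm_4a tm_s1 tm_s2 tm_s3)

lemma blk4: "dw (4*m) 4 = (if tm m then [0,1,2, if tm (Suc m) then 1 else 0]
                           else [2,1,0, if tm (Suc m) then 2 else 1])"
  unfolding dw4 d_val by (simp add: tm_4a tm_s1 tm_s2 tm_s3 tm_s4)

lemma dw_blk: "dw (4*m) (4 + n) = dw (4*m) 4 @ dw (4 * Suc m) n"
proof -
  have "4*m + 4 = 4 * Suc m" by simp
  then show ?thesis using dw_add[of "4*m" 4 n] by (simp only:)
qed

lemma gap1: "\<not> tm p \<Longrightarrow> \<not> tm (Suc p) \<Longrightarrow> dw (4*p) 7 = [2,1,0,1,2,1,0]"
  using dw_blk[of p 3] blk4[of p] blk3[of "Suc p"] by simp

lemma gap2: "\<not> tm p \<Longrightarrow> tm (Suc p) \<Longrightarrow> \<not> tm (Suc (Suc p)) \<Longrightarrow>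
    dw (4*p) 11 = [2,1,0,2,0,1,2,0,2,1,0]"
  using dw_blk[of p 7] dw_blk[of "Suc p" 3] blk4[of p] blk4[of "Suc p"] blk3[of "Suc (Suc p)"] by simp

lemma gap3: "\<not> tm p \<Longrightarrow> tm (Suc p) \<Longrightarrow> tm (Suc (Suc p)) \<Longrightarrow> \<not> tm (Suc (Suc (Suc p))) \<Longrightarrow>
    dw (4*p) 15 = [2,1,0,2,0,1,2,1,0,1,2,0,2,1,0]"
  using dw_blk[of p 11] dw_blk[of "Suc p" 7] dw_blk[of "Suc (Suc p)" 3]
    blk4[of p] blk4[of "Suc p"] blk4[of "Suc (Suc p)"] blk3[of "Suc (Suc (Suc p))"] by simp

lemma pre3: "\<not> tm z \<Longrightarrow> dw 0 (4*z+3) = dw 0 (4*z) @ [2,1,0]"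
  using dw_add[of 0 "4*z" 3] blk3[of z] by simp

lemma ext_step:
  assumes p: "\<not> tm p" and pz: "p < z"
    and W: "\<forall>z'\<le>p. \<not> tm z' \<longrightarrow> sq_step\<^sup>*\<^sup>* W (dw 0 (4*z'+3))"
    and sW: "set W \<subseteq> {0,1,2}"
    and GA: "sq_step\<^sup>*\<^sup>* ([2,1,0] @ G) (dw (4*p) (4*(z-p)+3))"
    and GQ: "sq_step\<^sup>*\<^sup>* ([2,1,0] @ G) [2,1,0]"
    and sG: "set G \<subseteq> {0,1,2}"
    and mid: "\<forall>z'. p < z' \<and> z' < z \<longrightarrow> tm z'"
  shows "\<exists>W'. set W' \<subseteq> {0,1,2} \<and> (\<forall>z'\<le>z. \<not> tm z' \<longrightarrow> sq_step\<^sup>*\<^sup>* W' (dw 0 (4*z'+3)))"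
proof (intro exI conjI allI impI)
  show "set (W @ G) \<subseteq> {0,1,2}" using sW sG by simp
  fix z' assume z': "z' \<le> z" "\<not> tm z'"
  show "sq_step\<^sup>*\<^sup>* (W @ G) (dw 0 (4*z'+3))"
  proof (cases "z' \<le> p")
    case True
    have "sq_step\<^sup>*\<^sup>* (W @ G) (dw 0 (4*z'+3) @ G)" using W True z' rt_ctx_r by blast
    also have "dw 0 (4*z'+3) @ G = dw 0 (4*z') @ ([2,1,0] @ G)" using pre3[OF z'(2)] by simp
    also have "sq_step\<^sup>*\<^sup>* \<dots> (dw 0 (4*z') @ [2,1,0])" using rt_ctx_l[OF GQ] .
    also have "dw 0 (4*z') @ [2,1,0] = dw 0 (4*z'+3)" using pre3[OF z'(2)] by simp
    finally show ?thesis .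
  next
    case False
    then have "p < z'" by simp
    then have "\<not> z' < z" using mid z'(2) by blast
    then have "z' = z" using z'(1) by simp
    have "sq_step\<^sup>*\<^sup>* (W @ G) (dw 0 (4*p+3) @ G)" using W p rt_ctx_r by blast
    also have "dw 0 (4*p+3) @ G = dw 0 (4*p) @ ([2,1,0] @ G)" using pre3[OF p] by simp
    also have "sq_step\<^sup>*\<^sup>* \<dots> (dw 0 (4*p) @ dw (4*p) (4*(z-p)+3))" using rt_ctx_l[OF GA] .
    also have "dw 0 (4*p) @ dw (4*p) (4*(z-p)+3) = dw 0 (4*p + (4*(z-p)+3))"
      using dw_add[of 0 "4*p" "4*(z-p)+3"] by simp
    also have "4*p + (4*(z-p)+3) = 4*z'+3" using pz \<open>z' = z\<close> by simp
    finally show ?thesis .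
  qed
qed

lemma claim: "\<not> tm z \<Longrightarrow> \<exists>W. set W \<subseteq> {0,1,2} \<and> (\<forall>z'\<le>z. \<not> tm z' \<longrightarrow> sq_step\<^sup>*\<^sup>* W (dw 0 (4*z'+3)))"
proof (induction z rule: less_induct)
  case (less z)
  show ?case
  proof (cases "z = 0")
    case True
    have "dw 0 3 = [2,1,0]" using blk3[of 0] by simp
    then show ?thesis using True by (intro exI[of _ "[2,1,0]"]) auto
  next
    case False
    show ?thesis
    proof (cases "tm (z - 1)")
      case False
      define p where "p = z - 1"
      have pz: "p < z" "z = Suc p" using \<open>z \<noteq> 0\<close> p_def by auto
      have tp: "\<not> tm p" using False unfolding p_def .
      obtain W where W: "set W \<subseteq> {0,1,2}" "\<forall>z'\<le>p. \<not> tm z' \<longrightarrow> sq_step\<^sup>*\<^sup>* W (dw 0 (4*z'+3))"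
        using less.IH[OF pz(1) tp] by blast
      have t1: "\<not> tm (Suc p)" using less.prems pz(2) by simp
      have zp: "4*(z-p)+3 = 7" using pz(2) by simp
      have "dw (4*p) (4*(z-p)+3) = [2,1,0,1,2,1,0]" unfolding zp using gap1[OF tp t1] .
      then have GA: "sq_step\<^sup>*\<^sup>* ([2,1,0] @ G1) (dw (4*p) (4*(z-p)+3))" using G1_A by simp
      have mid: "\<forall>z'. p < z' \<and> z' < z \<longrightarrow> tm z'" using pz(2) by auto
      show ?thesis by (rule ext_step[OF tp pz(1) W(2) W(1) GA G1_Q G1_set mid])
    next
      case True
      show ?thesis
      proof (cases "z \<ge> 2 \<and> \<not> tm (z - 2)")
        case True2: True
        define p where "p = z - 2"
        have pz: "p < z" "z = Suc (Suc p)" using True2 p_def by auto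
        have tp: "\<not> tm p" using True2 unfolding p_def by simp
        obtain W where W: "set W \<subseteq> {0,1,2}" "\<forall>z'\<le>p. \<not> tm z' \<longrightarrow> sq_step\<^sup>*\<^sup>* W (dw 0 (4*z'+3))"
          using less.IH[OF pz(1) tp] by blast
        have t1: "tm (Suc p)" using True pz(2) by simp
        have t2: "\<not> tm (Suc (Suc p))" using less.prems pz(2) by simp
        have zp: "4*(z-p)+3 = 11" using pz(2) by simp
        have "dw (4*p) (4*(z-p)+3) = [2,1,0,2,0,1,2,0,2,1,0]"
          unfolding zp using gap2[OF tp t1 t2] .
        moreover have "\<forall>z'. p < z' \<and> z' < z \<longrightarrow> tm z'" using t1 pz(2) by (auto simp: less_Suc_eq)
        ultimately have GA: "sq_step\<^sup>*\<^sup>* ([2,1,0] @ G2) (dw (4*p) (4*(z-p)+3))"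
          and mid: "\<forall>z'. p < z' \<and> z' < z \<longrightarrow> tm z'" using G2_A by simp_all
        show ?thesis by (rule ext_step[OF tp pz(1) W(2) W(1) GA G2_Q G2_set mid])
      next
        case False2: False
        have z3: "z \<ge> 3"
        proof (rule ccontr)
          assume "\<not> z \<ge> 3"
          then have "z = 1 \<or> z = 2" using \<open>z \<noteq> 0\<close> by auto
          then show False using True False2 by auto
        qed
        have t2: "tm (z - 2)" using False2 z3 by auto
        define p where "p = z - 3"
        have pz: "p < z" "z = Suc (Suc (Suc p))" using z3 p_def by auto
        have t1: "tm (Suc p)" "tm (Suc (Suc p))" using True t2 pz by simp_all
        have tp: "\<not> tm p"
        proof
          assume tp: "tm p"
          obtain j where "p \<le> j" "j \<le> p + 1" "tm (j + 1) \<noteq> tm j"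
            using no_overlap[of 1 p] by auto
          then have "j = p \<or> j = Suc p" by auto
          then show False using tp t1 \<open>tm (j + 1) \<noteq> tm j\<close> by auto
        qed
        obtain W where W: "set W \<subseteq> {0,1,2}" "\<forall>z'\<le>p. \<not> tm z' \<longrightarrow> sq_step\<^sup>*\<^sup>* W (dw 0 (4*z'+3))"
          using less.IH[OF pz(1) tp] by blast
        have t3: "\<not> tm (Suc (Suc (Suc p)))" using less.prems pz(2) by simp
        have zp: "4*(z-p)+3 = 15" using pz(2) by simp
        have "dw (4*p) (4*(z-p)+3) = [2,1,0,2,0,1,2,1,0,1,2,0,2,1,0]"
          unfolding zp using gap3[OF tp t1 t3] .
        moreover have "\<forall>z'. p < z' \<and> z' < z \<longrightarrow> tm z'" using t1 pz(2) by (auto simp: less_Suc_eq)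
        ultimately have GA: "sq_step\<^sup>*\<^sup>* ([2,1,0] @ G3) (dw (4*p) (4*(z-p)+3))"
          and mid: "\<forall>z'. p < z' \<and> z' < z \<longrightarrow> tm z'" using G3_A by simp_all
        show ?thesis by (rule ext_step[OF tp pz(1) W(2) W(1) GA G3_Q G3_set mid])
      qed
    qed
  qed
qed

lemma tm_pow: "\<not> tm (4^j - 1)"
proof (induction j)
  case 0 then show ?case by simp
next
  case (Suc j)
  obtain y where y: "(4::nat)^j = Suc y" using not0_implies_Suc[of "(4::nat)^j"] by auto
  have "(4::nat)^Suc j - 1 = 4*y+3" using y by simp
  moreover have "(4::nat)^j - 1 = y" using y by simp
  ultimately show ?case using Suc tm_4d[of y] by simp
qed

lemma step_inv: "sq_step w w' \<Longrightarrow> set w' = set w \<and> length w' \<le> length w"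
  unfolding sq_step_def by auto

lemma rt_inv: "sq_step\<^sup>*\<^sup>* w w' \<Longrightarrow> set w' \<subseteq> set w \<and> length w' \<le> length w"
proof (induction rule: rtranclp_induct)
  case base then show ?case by simp
next
  case (step y z) then show ?case using step_inv[of y z] by auto
qed

lemma finite_reducts: "finite (reducts W)"
proof (rule finite_subset)
  show "reducts W \<subseteq> {xs. set xs \<subseteq> set W \<and> length xs \<le> length W}"
    unfolding reducts_def using rt_inv by blast
  show "finite {xs. set xs \<subseteq> set W \<and> length xs \<le> length W}"
    by (rule finite_lists_length_le) simp
qed

theorem theorem2p4:
  fixes k :: nat
  assumes "k \<ge> 1"
  shows "\<exists>W :: nat list. set W \<subseteq> {0, 1, 2} \<and> r W \<ge> k"
proof -
  obtain W where W: "set W \<subseteq> {0,1,2}"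
    "\<forall>z'\<le>4^k - 1. \<not> tm z' \<longrightarrow> sq_step\<^sup>*\<^sup>* W (dw 0 (4*z'+3))"
    using claim[OF tm_pow[of k]] by blast
  define f where "f j = dw 0 (4*(4^j - 1)+3)" for j :: nat
  have sub: "f ` {..<k} \<subseteq> reducts W"
  proof
    fix x assume "x \<in> f ` {..<k}"
    then obtain j where j: "j < k" "x = f j" by auto
    have "(4::nat)^j \<le> 4^k" using j by (simp add: power_increasing)
    then have "4^j - 1 \<le> (4::nat)^k - 1" by (rule diff_le_mono)
    then have "sq_step\<^sup>*\<^sup>* W x" using W(2) tm_pow[of j] j f_def by simp
    then show "x \<in> reducts W" unfolding reducts_def using j f_def sqfree_dw by simp
  qed
  have inj: "inj_on f {..<k}"
  proof
    fix i j assume "i \<in> {..<k}" "j \<in> {..<k}" "f i = f j"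
    then have "length (f i) = length (f j)" by simp
    then have "4*(4^i - 1)+3 = 4*(4^j - 1)+(3::nat)" unfolding f_def length_dw .
    then have "(4::nat)^i - 1 = 4^j - 1" by simp
    moreover have "(4::nat)^i \<ge> 1" "(4::nat)^j \<ge> 1" by simp_all
    ultimately have "(4::nat)^i = 4^j" by linarith
    then show "i = j" by simp
  qed
  have "k = card (f ` {..<k})" using inj by (simp add: card_image)
  also have "\<dots> \<le> card (reducts W)" using sub finite_reducts by (rule card_mono[rotated])
  finally show ?thesis using W(1) unfolding r_def by blast
qed

end
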